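(* Let $0<\lambda\le\Lambda$ and let $u\in C(\overline{Q_1})$ be a (viscosity) solution of $u_t-a_{ij}(x,t)u_{ij}=0$ in $Q_1$, where the measurable coefficients satisfy $\lambda I\le(a_{ij}(x,t))\le\Lambda I$ in $Q_1$. Let $A>0$ and assume that for every $t\in[-1,0]$, $$\operatorname{osc}_{x\in B_1}u(x,t)\le A.$$ Then $\operatorname{osc}_{Q_1}u\le CA$, where $C>0$ depends only on $\Lambda$ and $n$.
   Context: $\operatorname{osc}_E u=\sup_E u-\inf_E u$. $B_1$ is the unit ball of $\mathbb{R}^n$ centered at $0$, $Q_1=B_1\times(-1,0]$; $u_{ij}=\partial_{x_ix_j}u$, summation over repeated indices. *)

theory Defs
  imports "HOL-Analysis.Analysis"
begin

definition osc :: "'a set \<Rightarrow> ('a \<Rightarrow> real) \<Rightarrow> real" where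
  "osc E f = (SUP e\<in>E. f e) - (INF e\<in>E. f e)"

definition Q1 :: "((real^'n) \<times> real) set" where
  "Q1 = ball 0 1 \<times> {-1<..0}"

definition Q1_closure :: "((real^'n) \<times> real) set" where
  "Q1_closure = cball 0 1 \<times> {-1..0}"

text \<open>Parabolic second order superjet (Crandall--Ishii--Lions) of u at (x,t) relative to S:
  (q,p,X) with X symmetric such that
  u(y,s) <= u(x,t) + q(s-t) + p.(y-x) + 1/2 (y-x).X(y-x) + o(|y-x|^2+|s-t|) as (y,s) -> (x,t) in S.\<close>
definition parab_superjet ::
  "((real^'n) \<times> real) set \<Rightarrow> (real^'n \<Rightarrow> real \<Rightarrow> real) \<Rightarrow> real^'n \<Rightarrow> real
     \<Rightarrow> (real \<times> (real^'n) \<times> (real^'n^'n)) set" where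
  "parab_superjet S u x t = {(q, p, X). transpose X = X \<and>
     (\<forall>\<epsilon>>0. eventually (\<lambda>(y, s). u y s \<le> u x t + q * (s - t) + p \<bullet> (y - x)
          + (1/2) * ((y - x) \<bullet> (X *v (y - x))) + \<epsilon> * (norm (y - x)^2 + \<bar>s - t\<bar>))
        (at (x, t) within S))}"

definition parab_subjet ::
  "((real^'n) \<times> real) set \<Rightarrow> (real^'n \<Rightarrow> real \<Rightarrow> real) \<Rightarrow> real^'n \<Rightarrow> real
     \<Rightarrow> (real \<times> (real^'n) \<times> (real^'n^'n)) set" where
  "parab_subjet S u x t = {(q, p, X). transpose X = X \<and>
     (\<forall>\<epsilon>>0. eventually (\<lambda>(y, s). u y s \<ge> u x t + q * (s - t) + p \<bullet> (y - x)
          + (1/2) * ((y - x) \<bullet> (X *v (y - x))) - \<epsilon> * (norm (y - x)^2 + \<bar>s - t\<bar>))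
        (at (x, t) within S))}"

definition mat_pair :: "real^'n^'n \<Rightarrow> real^'n^'n \<Rightarrow> real" where
  "mat_pair a X = (\<Sum>i\<in>UNIV. \<Sum>j\<in>UNIV. a $ i $ j * X $ i $ j)"

definition visc_solution ::
  "(real^'n \<Rightarrow> real \<Rightarrow> real^'n^'n) \<Rightarrow> ((real^'n) \<times> real) set \<Rightarrow> (real^'n \<Rightarrow> real \<Rightarrow> real) \<Rightarrow> bool" where
  "visc_solution a S u \<longleftrightarrow>
     continuous_on S (\<lambda>(x, t). u x t) \<and>
     (\<forall>(x, t)\<in>S. \<forall>(q, p, X)\<in>parab_superjet S u x t. q - mat_pair (a x t) X \<le> 0) \<and>
     (\<forall>(x, t)\<in>S. \<forall>(q, p, X)\<in>parab_subjet S u x t. q - mat_pair (a x t) X \<ge> 0)"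

definition unif_elliptic :: "real \<Rightarrow> real \<Rightarrow> real^'n^'n \<Rightarrow> bool" where
  "unif_elliptic l L a \<longleftrightarrow> transpose a = a \<and>
     (\<forall>\<xi>. l * norm \<xi> ^ 2 \<le> \<xi> \<bullet> (a *v \<xi>) \<and> \<xi> \<bullet> (a *v \<xi>) \<le> L * norm \<xi> ^ 2)"

end

theory Submission
  imports Defs
begin

lemma mat_mulv: "(mat c :: real^'n^'n) *v v = c *s v"
  by (simp add: vec_eq_iff matrix_vector_mult_def mat_def if_distrib[where f="\<lambda>x. x * _"] cong: if_cong)

lemma neg_mulv: "(- X :: real^'n^'n) *v v = - (X *v v)"
  by (simp add: vec_eq_iff matrix_vector_mult_def sum_negf)

lemma transpose_neg: "transpose (- X :: real^'n^'n) = - transpose X"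
  by (simp add: vec_eq_iff transpose_def)

lemma mat_pair_neg: "mat_pair a (- X) = - mat_pair a X"
  by (simp add: mat_pair_def sum_negf)

lemma mat_pair_mat: "mat_pair (a::real^'n^'n) (mat c) = c * (\<Sum>i\<in>UNIV. a$i$i)"
  by (simp add: mat_pair_def mat_def sum_distrib_left if_distrib cong: if_cong) (simp add: mult.commute)

lemma trace_bound:
  assumes "unif_elliptic l L (a::real^'n^'n)"
  shows "(\<Sum>i\<in>UNIV. a$i$i) \<le> real CARD('n) * L"
proof -
  have "a$i$i \<le> L" for i
  proof -
    have "axis i 1 \<bullet> (a *v axis i 1) \<le> L * norm (axis i (1::real)) ^ 2"
      using assms unfolding unif_elliptic_def by blast
    moreover have "axis i 1 \<bullet> (a *v axis i 1) = a$i$i"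
      by (simp only: inner_axis') (simp add: matrix_vector_mult_def axis_def if_distrib[where f="\<lambda>x. _ * x"] cong: if_cong)
    ultimately show ?thesis by simp
  qed
  then have "(\<Sum>i\<in>UNIV. a$i$i) \<le> (\<Sum>i\<in>(UNIV::'n set). L)" by (intro sum_mono) auto
  then show ?thesis by simp
qed

lemma visc_neg:
  assumes "visc_solution a S u"
  shows "visc_solution a S (\<lambda>x t. - u x t)"
proof -
  have c: "continuous_on S (\<lambda>(x, t). u x t)" using assms unfolding visc_solution_def by blast
  have "continuous_on S (\<lambda>(x, t). - u x t)"
    using continuous_on_minus[OF c] by (simp add: case_prod_unfold)
  moreover
  have "q - mat_pair (a x t) X \<le> 0" if xt: "(x,t)\<in>S" and j: "(q,p,X) \<in> parab_superjet S (\<lambda>x t. - u x t) x t" for x t q p X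
  proof -
    have "(-q,-p,-X) \<in> parab_subjet S u x t"
      using j unfolding parab_superjet_def parab_subjet_def
      by (auto simp: transpose_neg neg_mulv elim!: eventually_mono)
    then have "-q - mat_pair (a x t) (-X) \<ge> 0" using assms xt unfolding visc_solution_def by blast
    then show ?thesis by (simp add: mat_pair_neg)
  qed
  moreover
  have "q - mat_pair (a x t) X \<ge> 0" if xt: "(x,t)\<in>S" and j: "(q,p,X) \<in> parab_subjet S (\<lambda>x t. - u x t) x t" for x t q p X
  proof -
    have "(-q,-p,-X) \<in> parab_superjet S u x t"
      using j unfolding parab_superjet_def parab_subjet_def
      by (auto simp: transpose_neg neg_mulv elim!: eventually_mono)
    then have "-q - mat_pair (a x t) (-X) \<le> 0" using assms xt unfolding visc_solution_def by blast
    then show ?thesis by (simp add: mat_pair_neg)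
  qed
  ultimately show ?thesis unfolding visc_solution_def by blast
qed

lemma norm_sq_diff: "norm (y::real^'n) ^ 2 - norm x ^ 2 = 2 * (x \<bullet> (y - x)) + norm (y - x) ^ 2"
  by (simp add: power2_norm_eq_inner inner_diff_left inner_diff_right inner_commute algebra_simps)

lemma barrier:
  fixes u :: "real^'n \<Rightarrow> real \<Rightarrow> real" and a :: "real^'n \<Rightarrow> real \<Rightarrow> real^'n^'n"
  assumes vs: "visc_solution a Q1 u"
  and tr: "\<forall>(x,t)\<in>Q1. (\<Sum>i\<in>UNIV. a x t $i$i) \<le> real CARD('n) * L"
  and A: "A > 0" and L: "L > 0"
  and hosc: "\<forall>t\<in>{-1<..0}. \<forall>x\<in>ball 0 1. \<forall>y\<in>ball 0 1. u x t - u y t \<le> A"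
  and t1: "-1 < t1" "t1 \<le> 0"
  and s: "t1 \<le> s" "s \<le> 0"
  shows "u 0 s \<le> u 0 t1 + A + (16 * real CARD('n) * L + 1) * A"
proof -
  define n where "n = real CARD('n)"
  have n0: "n \<ge> 0" unfolding n_def by simp
  define \<beta> where "\<beta> = 8 * A"
  define \<gamma> where "\<gamma> = 16 * n * L * A + A"
  define M1 where "M1 = u 0 t1 + A"
  have \<beta>0: "\<beta> > 0" using A by (simp add: \<beta>_def)
  have \<gamma>0: "\<gamma> > 0" proof -
    have "0 \<le> 16 * n * L * A" using A L n0 by simp
    then show ?thesis using A unfolding \<gamma>_def by linarith
  qed
  have init: "u x t1 \<le> M1" if "x \<in> cball 0 (1/2)" for x :: "real^'n"
  proof -
    have "x \<in> ball 0 1" "(0::real^'n) \<in> ball 0 1" "t1 \<in> {-1<..0}" using that t1 by (auto simp: dist_norm)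
    then show ?thesis using hosc unfolding M1_def by fastforce
  qed
  define K where "K = cball (0::real^'n) (1/2) \<times> {t1..0}"
  define g where "g = (\<lambda>z. u (fst z) (snd z) - (\<gamma> * (snd z - t1) + \<beta> * (norm (fst z))^2))"
  have KQ: "K \<subseteq> Q1" using t1 unfolding K_def Q1_def by (auto simp: dist_norm)
  have cu: "continuous_on Q1 (\<lambda>z. u (fst z) (snd z))"
    using vs unfolding visc_solution_def by (simp add: case_prod_unfold)
  have cg: "continuous_on K g" unfolding g_def
    by (intro continuous_intros continuous_on_subset[OF cu KQ])
  have Kc: "compact K" unfolding K_def by (intro compact_Times compact_cball compact_Icc)
  have Kne: "K \<noteq> {}" using t1 unfolding K_def by auto
  obtain z where zK: "z \<in> K" and zmax: "\<forall>w\<in>K. g w \<le> g z"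
    using continuous_attains_sup[OF Kc Kne cg] by blast
  obtain xs ss where zdef: "z = (xs, ss)" by (cases z)
  have xsK: "norm xs \<le> 1/2" and ssK: "t1 \<le> ss" "ss \<le> 0" using zK unfolding zdef K_def by auto
  have xs_lt: "norm xs < 1/2"
  proof (rule ccontr)
    assume "\<not> norm xs < 1/2"
    then have nx: "norm xs = 1/2" using xsK by simp
    have "(0, ss) \<in> K" using ssK unfolding K_def by auto
    then have le: "g (0, ss) \<le> g z" using zmax by blast
    have "u xs ss - u 0 ss \<le> A" using hosc ssK t1 nx by (auto simp: dist_norm)
    moreover have "\<beta> * (norm xs)^2 = 2 * A" unfolding nx \<beta>_def by (simp add: power2_eq_square)
    ultimately have "g z < g (0, ss)" using A unfolding g_def zdef by simp
    then show False using le by simp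
  qed
  have gz: "g z \<le> M1"
  proof (cases "ss = t1")
    case True
    have "\<beta> * (norm xs)^2 \<ge> 0" using \<beta>0 by simp
    then show ?thesis using init[of xs] xsK True unfolding g_def zdef by simp
  next
    case False
    then have sgt: "t1 < ss" using ssK by simp
    define p where "p = (2 * \<beta>) *s xs"
    define X where "X = (mat (2 * \<beta>) :: real^'n^'n)"
    define U where "U = ball (0::real^'n) (1/2) \<times> {t1<..}"
    have oU: "open U" unfolding U_def by (intro open_Times open_ball open_greaterThan)
    have zU: "(xs, ss) \<in> U" unfolding U_def using xs_lt sgt by auto
    have transp: "transpose X = X" unfolding X_def by (rule transpose_mat)
    have evall: "\<forall>\<epsilon>>0. \<forall>\<^sub>F (y, s) in at (xs, ss) within Q1. u y s \<le> u xs ss + \<gamma> * (s - ss) + p \<bullet> (y - xs) + 1 / 2 * ((y - xs) \<bullet> (X *v (y - xs))) + \<epsilon> * ((norm (y - xs))\<^sup>2 + \<bar>s - ss\<bar>)"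
    proof (intro allI impI)
      fix \<epsilon> :: real assume e: "\<epsilon> > 0"
      have ev: "\<forall>\<^sub>F w in nhds (xs, ss). w \<in> U" by (rule eventually_nhds_in_open[OF oU zU])
      have "u y s \<le> u xs ss + \<gamma> * (s - ss) + p \<bullet> (y - xs) + 1 / 2 * ((y - xs) \<bullet> (X *v (y - xs))) + \<epsilon> * ((norm (y - xs))\<^sup>2 + \<bar>s - ss\<bar>)"
        if yU: "(y, s) \<in> U" and yQ: "(y, s) \<in> Q1" for y s
      proof -
        have "(y, s) \<in> K" using yU yQ unfolding U_def Q1_def K_def by auto
        then have "g (y, s) \<le> g z" using zmax by blast
        then have "u y s \<le> u xs ss + \<gamma> * (s - ss) + \<beta> * (norm y ^ 2 - norm xs ^ 2)"
          unfolding g_def zdef by (simp add: algebra_simps)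
        also have "\<beta> * (norm y ^ 2 - norm xs ^ 2) = p \<bullet> (y - xs) + 1 / 2 * ((y - xs) \<bullet> (X *v (y - xs)))"
          unfolding p_def X_def mat_mulv norm_sq_diff
          by (simp add: power2_norm_eq_inner scalar_mult_eq_scaleR inner_diff_left inner_diff_right inner_commute algebra_simps)
        finally show ?thesis
          using e by (simp add: add_increasing2)
      qed
      note H = this
      show "\<forall>\<^sub>F (y, s) in at (xs, ss) within Q1. u y s \<le> u xs ss + \<gamma> * (s - ss) + p \<bullet> (y - xs) + 1 / 2 * ((y - xs) \<bullet> (X *v (y - xs))) + \<epsilon> * ((norm (y - xs))\<^sup>2 + \<bar>s - ss\<bar>)"
        unfolding eventually_at_filter
        by (rule eventually_mono[OF ev]) (clarify, rule H, auto)
    qed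
    have jet: "(\<gamma>, p, X) \<in> parab_superjet Q1 u xs ss"
      unfolding parab_superjet_def using transp evall by simp
    have zQ: "(xs, ss) \<in> Q1" using zK KQ zdef by auto
    have "\<gamma> - mat_pair (a xs ss) X \<le> 0"
      using vs zQ jet unfolding visc_solution_def by blast
    moreover have "mat_pair (a xs ss) X \<le> 2 * \<beta> * (n * L)"
      unfolding X_def mat_pair_mat n_def using tr zQ \<beta>0
      by (auto intro!: mult_left_mono)
    ultimately have False using A unfolding \<gamma>_def \<beta>_def by (simp add: algebra_simps)
    then show ?thesis ..
  qed
  have "(0, s) \<in> K" using s unfolding K_def by auto
  then have "g (0, s) \<le> M1" using zmax gz by fastforce
  then have "u 0 s \<le> M1 + \<gamma> * (s - t1)" unfolding g_def by simp
  moreover have "\<gamma> * (s - t1) \<le> \<gamma>" using \<gamma>0 s t1 by (simp add: mult_le_cancel_left1)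
  ultimately show ?thesis unfolding M1_def \<gamma>_def n_def by (simp add: algebra_simps)
qed

lemma osc_le:
  assumes "S \<noteq> {}" and "\<forall>z\<in>S. \<forall>w\<in>S. f z - f w \<le> (K::real)"
  shows "osc S f \<le> K"
proof -
  have "f z - K \<le> (INF w\<in>S. f w)" if "z \<in> S" for z
  proof (rule cINF_greatest)
    show "S \<noteq> {}" by (rule assms(1))
    fix x assume "x \<in> S"
    then have "f z - f x \<le> K" using assms(2) that by blast
    then show "f z - K \<le> f x" by linarith
  qed
  then have "(SUP z\<in>S. f z) \<le> (INF w\<in>S. f w) + K"
    using assms by (intro cSUP_least) (auto simp: algebra_simps)
  then show ?thesis unfolding osc_def by simp
qed

theorem lemma4p3:
  fixes \<Lambda> :: real
  assumes "\<Lambda> > 0"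
  shows "\<exists>C>0. \<forall>(lam::real) (a :: real^'n \<Rightarrow> real \<Rightarrow> real^'n^'n) (u :: real^'n \<Rightarrow> real \<Rightarrow> real) (A::real).
     0 < lam \<longrightarrow> lam \<le> \<Lambda> \<longrightarrow>
     (\<forall>i j. set_borel_measurable lebesgue Q1 (\<lambda>z. a (fst z) (snd z) $ i $ j)) \<longrightarrow>
     (\<forall>(x, t)\<in>Q1. unif_elliptic lam \<Lambda> (a x t)) \<longrightarrow>
     continuous_on Q1_closure (\<lambda>(x, t). u x t) \<longrightarrow>
     visc_solution a Q1 u \<longrightarrow>
     A > 0 \<longrightarrow>
     (\<forall>t\<in>{-1..0}. osc (ball 0 1) (\<lambda>x. u x t) \<le> A) \<longrightarrow>
     osc Q1 (\<lambda>(x, t). u x t) \<le> C * A"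
proof -
  define K where "K = 16 * real CARD('n) * \<Lambda> + 1"
  have K0: "K > 0" using assms unfolding K_def
    by (metis add_nonneg_pos less_eq_real_def mult_nonneg_nonneg of_nat_0_le_iff zero_less_one mult_pos_pos numeral_One zero_le_numeral)
  show ?thesis
  proof (rule exI[of _ "K + 3"], intro conjI allI impI)
    show "K + 3 > 0" using K0 by simp
    fix lam :: real and a :: "real^'n \<Rightarrow> real \<Rightarrow> real^'n^'n" and u :: "real^'n \<Rightarrow> real \<Rightarrow> real" and A :: real
    assume lam: "0 < lam" "lam \<le> \<Lambda>"
      and meas: "\<forall>i j. set_borel_measurable lebesgue Q1 (\<lambda>z. a (fst z) (snd z) $ i $ j)"
      and ell: "\<forall>(x, t)\<in>Q1. unif_elliptic lam \<Lambda> (a x t)"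
      and cont: "continuous_on Q1_closure (\<lambda>(x, t). u x t)"
      and vs: "visc_solution a Q1 u"
      and A: "A > 0"
      and osc: "\<forall>t\<in>{-1..0}. osc (ball 0 1) (\<lambda>x. u x t) \<le> A"
    have tr: "\<forall>(x,t)\<in>Q1. (\<Sum>i\<in>UNIV. a x t $i$i) \<le> real CARD('n) * \<Lambda>"
      using ell trace_bound by fast
    have cmp: "compact ((\<lambda>(x, t). u x t) ` (Q1_closure :: ((real^'n) \<times> real) set))"
      unfolding Q1_closure_def
      by (rule compact_continuous_image) (use cont in \<open>auto simp: Q1_closure_def intro: compact_Times\<close>)
    then obtain B where B: "\<forall>z\<in>(Q1_closure :: ((real^'n) \<times> real) set). \<bar>(\<lambda>(x, t). u x t) z\<bar> \<le> B"
      using compact_imp_bounded bounded_real by (metis (no_types, lifting) image_eqI)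
    have hosc: "\<forall>t\<in>{-1<..0}. \<forall>x\<in>ball 0 1. \<forall>y\<in>ball 0 1. u x t - u y t \<le> A"
    proof (intro ballI)
      fix t x y assume t: "t \<in> {-1<..(0::real)}" and x: "x \<in> ball (0::real^'n) 1" and y: "y \<in> ball (0::real^'n) 1"
      have bd: "\<bar>u w t\<bar> \<le> B" if "w \<in> ball 0 1" for w
        using B[rule_format, of "(w,t)"] t that by (auto simp: Q1_closure_def)
      have ba: "bdd_above ((\<lambda>x. u x t) ` ball 0 1)" using bd by (intro bdd_aboveI2[where M=B]) (auto simp: abs_le_iff)
      have bb: "bdd_below ((\<lambda>x. u x t) ` ball 0 1)" using bd by (intro bdd_belowI2[where m="-B"]) (force simp: abs_le_iff)
      have "u x t \<le> (SUP w\<in>ball 0 1. u w t)" using ba x by (rule cSUP_upper2) simp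
      moreover have "(INF w\<in>ball 0 1. u w t) \<le> u y t" using bb y by (rule cINF_lower2) simp
      moreover have "osc (ball 0 1) (\<lambda>x. u x t) \<le> A" using osc t by auto
      ultimately show "u x t - u y t \<le> A" unfolding osc_def by linarith
    qed
    have hosc': "\<forall>t\<in>{-1<..0}. \<forall>x\<in>ball 0 1. \<forall>y\<in>ball 0 1. (- u x t) - (- u y t) \<le> A"
      using hosc by fastforce
    have vs': "visc_solution a Q1 (\<lambda>x t. - u x t)" by (rule visc_neg[OF vs])
    have up: "u 0 s \<le> u 0 t1 + A + K * A" if "-1 < t1" "t1 \<le> s" "s \<le> 0" for t1 s
      using barrier[OF vs tr A assms hosc, of t1 s] that unfolding K_def by simp
    have lo: "- u 0 s \<le> - u 0 t1 + A + K * A" if "-1 < t1" "t1 \<le> s" "s \<le> 0" for t1 s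
      using barrier[OF vs' tr A assms hosc', of t1 s] that unfolding K_def by simp
    have tdiff: "u 0 t - u 0 s \<le> A + K * A" if "-1 < t" "t \<le> 0" "-1 < s" "s \<le> 0" for t s
    proof (cases "s \<le> t")
      case True then show ?thesis using up[of s t] that by simp
    next
      case False then show ?thesis using lo[of t s] that by simp
    qed
    have "\<forall>z\<in>Q1. \<forall>w\<in>Q1. (\<lambda>(x, t). u x t) z - (\<lambda>(x, t). u x t) w \<le> (K + 3) * A"
    proof (intro ballI)
      fix z w :: "(real^'n) \<times> real" assume z: "z \<in> Q1" and w: "w \<in> Q1"
      obtain x t where zz: "z = (x, t)" by (cases z)
      obtain y s where ww: "w = (y, s)" by (cases w)
      have xt: "x \<in> ball 0 1" "t \<in> {-1<..0}" using z zz unfolding Q1_def by auto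
      have ys: "y \<in> ball 0 1" "s \<in> {-1<..0}" using w ww unfolding Q1_def by auto
      have o: "(0::real^'n) \<in> ball 0 1" by simp
      have "u x t - u 0 t \<le> A" using hosc xt o by blast
      moreover have "u 0 s - u y s \<le> A" using hosc ys o by blast
      moreover have "u 0 t - u 0 s \<le> A + K * A" using tdiff xt ys by auto
      ultimately show "(\<lambda>(x, t). u x t) z - (\<lambda>(x, t). u x t) w \<le> (K + 3) * A"
        unfolding zz ww by (simp add: algebra_simps)
    qed
    moreover have "Q1 \<noteq> ({} :: ((real^'n) \<times> real) set)" unfolding Q1_def by (auto intro: exI[of _ "(0, 0)"])
    ultimately show "osc Q1 (\<lambda>(x, t). u x t) \<le> (K + 3) * A" by (intro osc_le) auto
  qed
qed

end
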